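(* For every admissible sequence of bins $\sigma$ and all integers $s',\ell',k\ge 0$ with $2k\ge s'+2\ell'$, $$R(\sigma,0,k)\le \mathrm{OPT}(\sigma,s',\ell')+\min\{0,\ell'-s'\}\,S+(k-\ell')M.$$
   Context: Fix an integer $S>1$, $L=2S-1$, $M=4S-3$. Bins have integer sizes in $[S,M]$ and arrive in a sequence $\sigma$, admissible if it ends with at least as many bins of size $M$ as there are items under consideration. A packing assigns every item to a bin with total item size in each bin at most the bin size; its cost is the sum of the sizes of bins receiving at least one item. A packing is valid if each empty bin is smaller than every item packed in a later bin. A bin is wasteful if its empty space is at least the size of some item packed in a later bin; a packing is thrifty if no bin is wasteful. A partial packing of a finite sequence of bins is reasonable if every bin $b$ of that sequence contains: one item of size $S$ if $\mathrm{size}(b)\in[S,L-1]$; one item of size $L$ if $\mathrm{size}(b)=L$; two items of size $S$ or one item of size $L$ if $\mathrm{size}(b)\in[L+1,L+S-1]$; one item of size $S$ and one of size $L$ if $\mathrm{size}(b)=L+S$; three items of size $S$ or one item of size $S$ and one of size $L$ if $\mathrm{size}(b)\in[L+S+1,2L-1]$. The key bin of a packing is the first bin after which no item of size $L$ remains unpacked or at most two items of size $S$ remain unpacked; the front is the restriction of the packing to the prefix ending with the key bin. A packing is reasonable if it is thrifty and its front is reasonable. $\mathrm{OPT}(\sigma,s,\ell)$ is the minimum cost of a valid packing of $s$ items of size $S$ and $\ell$ items of size $L$ into $\sigma$; $R(\sigma,s,\ell)$ is the maximum cost of a reasonable packing of these items into $\sigma$. *)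

theory Defs
  imports Main "HOL-Library.Extended_Real"
begin

text \<open>Items: for an instance with s items of size S and l items of size L,
  items are numbered 0 ..< s + l; item i has size S if i < s and size L otherwise.\<close>

definition Lsz :: "nat \<Rightarrow> nat" where "Lsz S = 2 * S - 1"
definition Msz :: "nat \<Rightarrow> nat" where "Msz S = 4 * S - 3"

definition bins_ok :: "nat \<Rightarrow> nat list \<Rightarrow> bool" where
  "bins_ok S \<sigma> \<longleftrightarrow> (\<forall>b\<in>set \<sigma>. S \<le> b \<and> b \<le> Msz S)"

definition admissible :: "nat \<Rightarrow> nat list \<Rightarrow> nat \<Rightarrow> bool" where
  "admissible S \<sigma> n \<longleftrightarrow> (\<exists>\<rho>. \<sigma> = \<rho> @ replicate n (Msz S))"

definition isz :: "nat \<Rightarrow> nat \<Rightarrow> nat \<Rightarrow> nat" where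
  "isz S s i = (if i < s then S else Lsz S)"

definition load :: "nat \<Rightarrow> nat \<Rightarrow> nat \<Rightarrow> (nat \<Rightarrow> nat) \<Rightarrow> nat \<Rightarrow> nat" where
  "load S s l f b = (\<Sum>i\<in>{i. i < s + l \<and> f i = b}. isz S s i)"

definition used :: "nat \<Rightarrow> nat \<Rightarrow> (nat \<Rightarrow> nat) \<Rightarrow> nat \<Rightarrow> bool" where
  "used s l f b \<longleftrightarrow> (\<exists>i < s + l. f i = b)"

definition is_packing :: "nat \<Rightarrow> nat list \<Rightarrow> nat \<Rightarrow> nat \<Rightarrow> (nat \<Rightarrow> nat) \<Rightarrow> bool" where
  "is_packing S \<sigma> s l f \<longleftrightarrow>
     (\<forall>i < s + l. f i < length \<sigma>) \<and> (\<forall>b < length \<sigma>. load S s l f b \<le> \<sigma> ! b)"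

definition cost :: "nat list \<Rightarrow> nat \<Rightarrow> nat \<Rightarrow> (nat \<Rightarrow> nat) \<Rightarrow> nat" where
  "cost \<sigma> s l f = (\<Sum>b\<in>{b. b < length \<sigma> \<and> used s l f b}. \<sigma> ! b)"

definition valid :: "nat \<Rightarrow> nat list \<Rightarrow> nat \<Rightarrow> nat \<Rightarrow> (nat \<Rightarrow> nat) \<Rightarrow> bool" where
  "valid S \<sigma> s l f \<longleftrightarrow> is_packing S \<sigma> s l f \<and>
     (\<forall>b < length \<sigma>. \<not> used s l f b \<longrightarrow>
        (\<forall>i < s + l. b < f i \<longrightarrow> \<sigma> ! b < isz S s i))"

definition wasteful :: "nat \<Rightarrow> nat list \<Rightarrow> nat \<Rightarrow> nat \<Rightarrow> (nat \<Rightarrow> nat) \<Rightarrow> nat \<Rightarrow> bool" where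
  "wasteful S \<sigma> s l f b \<longleftrightarrow>
     (\<exists>i < s + l. b < f i \<and> isz S s i \<le> \<sigma> ! b - load S s l f b)"

definition thrifty :: "nat \<Rightarrow> nat list \<Rightarrow> nat \<Rightarrow> nat \<Rightarrow> (nat \<Rightarrow> nat) \<Rightarrow> bool" where
  "thrifty S \<sigma> s l f \<longleftrightarrow> is_packing S \<sigma> s l f \<and>
     (\<forall>b < length \<sigma>. \<not> wasteful S \<sigma> s l f b)"

definition key_bin :: "nat \<Rightarrow> nat \<Rightarrow> (nat \<Rightarrow> nat) \<Rightarrow> nat" where
  "key_bin s l f = (LEAST b. (\<forall>i. s \<le> i \<and> i < s + l \<longrightarrow> f i \<le> b)
                              \<or> card {i. i < s \<and> b < f i} \<le> 2)"

definition reasonable_bin :: "nat \<Rightarrow> nat list \<Rightarrow> nat \<Rightarrow> nat \<Rightarrow> (nat \<Rightarrow> nat) \<Rightarrow> nat \<Rightarrow> bool" where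
  "reasonable_bin S \<sigma> s l f b \<longleftrightarrow>
    (let cS = card {i. i < s \<and> f i = b};
         cL = card {i. s \<le> i \<and> i < s + l \<and> f i = b};
         L = Lsz S; z = \<sigma> ! b in
     (S \<le> z \<and> z \<le> L - 1 \<longrightarrow> cS = 1 \<and> cL = 0) \<and>
     (z = L \<longrightarrow> cS = 0 \<and> cL = 1) \<and>
     (L + 1 \<le> z \<and> z \<le> L + S - 1 \<longrightarrow> (cS = 2 \<and> cL = 0) \<or> (cS = 0 \<and> cL = 1)) \<and>
     (z = L + S \<longrightarrow> cS = 1 \<and> cL = 1) \<and>
     (L + S + 1 \<le> z \<and> z \<le> 2 * L - 1 \<longrightarrow> (cS = 3 \<and> cL = 0) \<or> (cS = 1 \<and> cL = 1)))"

definition reasonable :: "nat \<Rightarrow> nat list \<Rightarrow> nat \<Rightarrow> nat \<Rightarrow> (nat \<Rightarrow> nat) \<Rightarrow> bool" where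
  "reasonable S \<sigma> s l f \<longleftrightarrow> thrifty S \<sigma> s l f \<and>
     (\<forall>b. b \<le> key_bin s l f \<and> b < length \<sigma> \<longrightarrow> reasonable_bin S \<sigma> s l f b)"

text \<open>OPT: minimum cost of a valid packing; R: maximum cost of a reasonable packing
  (in the extended reals, so that the max of the empty set is -infinity)\<close>
definition OPT :: "nat \<Rightarrow> nat list \<Rightarrow> nat \<Rightarrow> nat \<Rightarrow> ereal" where
  "OPT S \<sigma> s l = Inf {ereal (real (cost \<sigma> s l f)) | f. valid S \<sigma> s l f}"

definition R :: "nat \<Rightarrow> nat list \<Rightarrow> nat \<Rightarrow> nat \<Rightarrow> ereal" where
  "R S \<sigma> s l = Sup {ereal (real (cost \<sigma> s l f)) | f. reasonable S \<sigma> s l f}"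

end

theory Submission imports Defs begin

lemma card_group:
  fixes g :: "'a \<Rightarrow> nat" and n :: nat
  assumes "\<forall>i\<in>A. g i < n" "finite A"
  shows "(\<Sum>b<n. card {i\<in>A. g i = b}) = card A"
proof -
  have "g ` A \<subseteq> {..<n}" using assms by auto
  moreover have "finite {..<n}" by simp
  ultimately have "(\<Sum>b\<in>{..<n}. (\<Sum>i\<in>{x. x \<in> A \<and> g x = b}. (1::nat))) = (\<Sum>i\<in>A. 1)"
    using assms(2) by (intro sum.group) auto
  then show ?thesis by simp
qed

lemma load_split:
  "load S s l f b = card {i. i < s \<and> f i = b} * S + card {i. s \<le> i \<and> i < s + l \<and> f i = b} * Lsz S"
proof -
  have e: "{i. i < s + l \<and> f i = b} = {i. i < s \<and> f i = b} \<union> {i. s \<le> i \<and> i < s + l \<and> f i = b}" by auto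
  have "load S s l f b = (\<Sum>i\<in>{i. i < s \<and> f i = b}. isz S s i) + (\<Sum>i\<in>{i. s \<le> i \<and> i < s + l \<and> f i = b}. isz S s i)"
    unfolding load_def e by (rule sum.union_disjoint) auto
  also have "(\<Sum>i\<in>{i. i < s \<and> f i = b}. isz S s i) = card {i. i < s \<and> f i = b} * S"
    by (simp add: isz_def)
  also have "(\<Sum>i\<in>{i. s \<le> i \<and> i < s + l \<and> f i = b}. isz S s i) = card {i. s \<le> i \<and> i < s + l \<and> f i = b} * Lsz S"
    by (simp add: isz_def)
  finally show ?thesis .
qed

lemma used_cards:
  "used s l f b \<longleftrightarrow> card {i. i < s \<and> f i = b} + card {i. s \<le> i \<and> i < s + l \<and> f i = b} > 0"
proof -
  have f1: "finite {i. i < s \<and> f i = b}" "finite {i. s \<le> i \<and> i < s + l \<and> f i = b}" by auto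
  show ?thesis unfolding used_def using f1
    apply (auto simp: card_gt_0_iff)
    using not_le apply blast
    using trans_less_add1 by blast
qed

lemma gbin:
  assumes S: "S > 1" and le: "j * S + e * Lsz S \<le> z" and zM: "z \<le> Msz S" and u: "j + e > 0"
  shows "j * S + e * (Msz S - S) \<le> (if Lsz S \<le> z then Msz S else z)
       \<and> e * Msz S \<le> (if Lsz S \<le> z then Msz S else z)"
proof (cases "e = 0")
  case True then show ?thesis using le zM by auto
next
  case False
  have e2: "e < 2"
  proof (rule ccontr)
    assume "\<not> e < 2" then have "e * Lsz S \<ge> 2 * Lsz S" by simp
    then have "2 * Lsz S \<le> z" using le by linarith
    then show False using zM S by (simp add: Lsz_def Msz_def)
  qed
  with False have e1: "e = 1" by simp
  have j2: "j < 2"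
  proof (rule ccontr)
    assume "\<not> j < 2" then have "j * S \<ge> 2 * S" by simp
    moreover have "j * S + Lsz S \<le> z" using le e1 by simp
    ultimately have "2 * S + Lsz S \<le> z" by linarith
    then show False using zM S by (simp add: Lsz_def Msz_def)
  qed
  have "Lsz S \<le> z" using le e1 by simp
  then show ?thesis using e1 j2 S by (cases j) (auto simp: Lsz_def Msz_def)
qed


lemma main_ineq:
  assumes S1: "S > 1" and bok: "bins_ok S \<sigma>" and kk: "2 * k \<ge> s' + 2 * l'"
    and rf: "reasonable S \<sigma> 0 k f" and vg: "valid S \<sigma> s' l' g"
  shows "int (cost \<sigma> 0 k f) \<le> int (cost \<sigma> s' l' g)
           + (min 0 (int l' - int s') * int S + (int k - int l') * int (Msz S))"
proof -
  define n where "n = length \<sigma>"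
  define L where "L = Lsz S"
  define M where "M = Msz S"
  have LM: "L \<le> M" "S \<le> L" "2 * S \<le> M" "M < 2 * L" using S1 by (auto simp: L_def M_def Lsz_def Msz_def)
  have hM: "\<And>b. b < n \<Longrightarrow> \<sigma> ! b \<le> M" using bok unfolding bins_ok_def n_def M_def
    by (auto simp: nth_mem)
  have thf: "thrifty S \<sigma> 0 k f" using rf by (simp add: reasonable_def)
  then have pf: "is_packing S \<sigma> 0 k f" by (simp add: thrifty_def)
  have pg: "is_packing S \<sigma> s' l' g" using vg by (simp add: valid_def)
  define cf where "cf b = card {i. i < k \<and> f i = b}" for b
  have fload: "load S 0 k f b = cf b * L" for b
    using load_split[of S 0 k f b] by (simp add: cf_def L_def)
  have usedf: "used 0 k f b \<longleftrightarrow> cf b > 0" for b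
    using used_cards[of 0 k f b] by (simp add: cf_def)
  have f1: "cf b \<le> 1" if "b < n" for b
  proof (rule ccontr)
    assume "\<not> cf b \<le> 1"
    then have "2 * L \<le> cf b * L" by simp
    also have "\<dots> \<le> \<sigma> ! b" using pf that fload[of b] unfolding is_packing_def n_def by metis
    also have "\<dots> \<le> M" using hM that .
    finally show False using LM by simp
  qed
  define Uf where "Uf = {b. b < n \<and> used 0 k f b}"
  have fin_Uf: "finite Uf" by (simp add: Uf_def)
  have cardUf: "card Uf = k"
  proof -
    have "(\<Sum>b<n. card {i\<in>{..<k}. f i = b}) = card {..<k}"
      by (rule card_group) (use pf in \<open>auto simp: is_packing_def n_def\<close>)
    moreover have "card {i\<in>{..<k}. f i = b} = (if b \<in> Uf then 1 else 0)" if "b < n" for b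
    proof -
      have "card {i\<in>{..<k}. f i = b} = cf b" by (simp add: cf_def)
      then show ?thesis using f1[OF that] usedf[of b] that by (auto simp: Uf_def)
    qed
    ultimately have "(\<Sum>b<n. (if b \<in> Uf then 1 else 0::nat)) = k" by simp
    moreover have "(\<Sum>b<n. (if b \<in> Uf then 1 else 0::nat)) = card Uf"
    proof -
      have "(\<Sum>b<n. (if b \<in> Uf then 1 else 0::nat)) = (\<Sum>b\<in>{..<n} \<inter> Uf. 1)"
        by (rule sum.inter_restrict[symmetric]) simp
      also have "{..<n} \<inter> Uf = Uf" by (auto simp: Uf_def)
      finally show ?thesis by simp
    qed
    ultimately show ?thesis by simp
  qed
  have UfB: "L \<le> \<sigma> ! b" if "b \<in> Uf" for b
  proof -
    have "L \<le> cf b * L" using that usedf[of b] by (auto simp: Uf_def)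
    also have "\<dots> \<le> \<sigma> ! b" using pf that fload[of b] unfolding is_packing_def Uf_def n_def by force
    finally show ?thesis .
  qed
  have Ufpre: "b \<in> Uf" if hyp: "b < n" "L \<le> \<sigma> ! b" "b' \<in> Uf" "b < b'" for b b'
  proof (rule ccontr)
    assume nb: "b \<notin> Uf"
    obtain i where i: "i < k" "f i = b'" using hyp(3) by (auto simp: Uf_def used_def)
    have "cf b = 0" using nb usedf[of b] that(1) by (auto simp: Uf_def)
    then have "load S 0 k f b = 0" using fload by simp
    then have "wasteful S \<sigma> 0 k f b" unfolding wasteful_def using i that
      by (auto simp: isz_def L_def)
    then show False using thf that(1) by (simp add: thrifty_def n_def)
  qed
  define Ug where "Ug = {b. b < n \<and> used s' l' g b}"
  define G where "G = {b \<in> Ug. L \<le> \<sigma> ! b}"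
  have fin_Ug: "finite Ug" by (simp add: Ug_def)
  have GUg: "G \<subseteq> Ug" by (auto simp: G_def)
  have fin_G: "finite G" using GUg fin_Ug finite_subset by blast
  have Ugpre: "b \<in> Ug" if hyp: "b < n" "L \<le> \<sigma> ! b" "b' \<in> Ug" "b < b'" for b b'
  proof (rule ccontr)
    assume nb: "b \<notin> Ug"
    obtain i where i: "i < s' + l'" "g i = b'" using hyp(3) by (auto simp: Ug_def used_def)
    have "\<sigma> ! b < isz S s' i" using vg nb that i unfolding valid_def by (auto simp: Ug_def n_def)
    moreover have "isz S s' i \<le> L" using LM by (simp add: isz_def L_def)
    ultimately show False using that(2) by simp
  qed
  have cmp: "Uf \<subseteq> G \<or> G \<subseteq> Uf"
  proof (rule ccontr)
    assume "\<not> (Uf \<subseteq> G \<or> G \<subseteq> Uf)"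
    then obtain b b' where b: "b \<in> Uf" "b \<notin> G" and b': "b' \<in> G" "b' \<notin> Uf" by blast
    have "b \<noteq> b'" using b b' by blast
    moreover have "\<not> b < b'"
    proof
      assume "b < b'"
      then have "b \<in> Ug" using Ugpre[of b b'] b' b UfB by (auto simp: G_def Uf_def)
      then show False using b UfB by (auto simp: G_def)
    qed
    moreover have "\<not> b' < b"
    proof
      assume "b' < b"
      then have "b' \<in> Uf" using Ufpre[of b' b] b' b by (auto simp: G_def Ug_def)
      then show False using b' by simp
    qed
    ultimately show False by linarith
  qed
  have costf: "cost \<sigma> 0 k f = (\<Sum>b\<in>Uf. \<sigma> ! b)" by (simp add: cost_def Uf_def n_def)
  have costg: "cost \<sigma> s' l' g = (\<Sum>b\<in>Ug. \<sigma> ! b)" by (simp add: cost_def Ug_def n_def)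
  define P where "P = (\<Sum>b\<in>G. \<sigma> ! b)"
  define Q where "Q = (\<Sum>b\<in>Ug - G. \<sigma> ! b)"
  have cg: "cost \<sigma> s' l' g = P + Q"
    unfolding costg P_def Q_def using sum.subset_diff[OF GUg fin_Ug] by (simp add: add.commute)
  show ?thesis
  proof (cases "Uf \<subseteq> G")
    case True
    have "cost \<sigma> 0 k f \<le> cost \<sigma> s' l' g"
      unfolding costf costg using True GUg fin_Ug by (intro sum_mono2) auto
    moreover have "0 \<le> min 0 (int l' - int s') * int S + (int k - int l') * int (Msz S)"
    proof -
      have "s' * S \<le> (2 * (k - l')) * S" using kk by (intro mult_right_mono) auto
      also have "\<dots> = (k - l') * (2 * S)" by simp
      also have "\<dots> \<le> (k - l') * M" using LM by (intro mult_left_mono) auto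
      finally have "s' * S \<le> (k - l') * M" .
      then have "int s' * int S \<le> int (k - l') * int M" by (metis of_nat_le_iff of_nat_mult)
      moreover have kl: "l' \<le> k" using kk by linarith
      ultimately have a: "int s' * int S \<le> (int k - int l') * int M" by (simp add: of_nat_diff)
      have "- int s' \<le> min 0 (int l' - int s')" by simp
      then have "- int s' * int S \<le> min 0 (int l' - int s') * int S" by (intro mult_right_mono) auto
      then show ?thesis using a by (simp add: M_def)
    qed
    ultimately show ?thesis by simp
  next
    case False
    with cmp have GUf: "G \<subseteq> Uf" by simp
    define c where "c = card G"
    have ck: "c \<le> k" unfolding c_def using cardUf card_mono[OF fin_Uf GUf] by simp
    have "cost \<sigma> 0 k f = P + (\<Sum>b\<in>Uf - G. \<sigma> ! b)"
      unfolding costf P_def using sum.subset_diff[OF GUf fin_Uf] by (simp add: add.commute)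
    also have "(\<Sum>b\<in>Uf - G. \<sigma> ! b) \<le> (\<Sum>b\<in>Uf - G. M)"
      by (intro sum_mono) (auto simp: Uf_def intro: hM)
    also have "\<dots> = (k - c) * M" using card_Diff_subset[OF fin_G GUf] cardUf by (simp add: c_def)
    finally have cf_le: "cost \<sigma> 0 k f \<le> P + (k - c) * M" by simp
    define j where "j b = card {i. i < s' \<and> g i = b}" for b
    define e where "e b = card {i. s' \<le> i \<and> i < s' + l' \<and> g i = b}" for b
    define \<psi> where "\<psi> b = (if used s' l' g b then (if L \<le> \<sigma> ! b then M else \<sigma> ! b) else 0)" for b
    have perbin: "j b * S + e b * (M - S) \<le> \<psi> b \<and> e b * M \<le> \<psi> b" if "b < n" for b
    proof (cases "used s' l' g b")
      case True
      have u: "j b + e b > 0" using True used_cards[of s' l' g b] by (simp add: j_def e_def)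
      have le: "j b * S + e b * Lsz S \<le> \<sigma> ! b"
        using pg that load_split[of S s' l' g b] unfolding is_packing_def n_def j_def e_def by metis
      have pe: "\<psi> b = (if Lsz S \<le> \<sigma> ! b then Msz S else \<sigma> ! b)"
        using True by (simp add: \<psi>_def L_def M_def)
      have "\<sigma> ! b \<le> Msz S" using hM[OF that] by (simp add: M_def)
      then show ?thesis unfolding pe M_def using gbin[OF S1 le _ u] by blast
    next
      case False
      then have "j b + e b = 0" using used_cards[of s' l' g b] unfolding j_def e_def by linarith
      moreover have "\<psi> b = 0" using False by (simp add: \<psi>_def)
      ultimately show ?thesis by simp
    qed
    have sj: "(\<Sum>b<n. j b) = s'"
    proof -
      have "(\<Sum>b<n. card {i\<in>{..<s'}. g i = b}) = card {..<s'}"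
        by (rule card_group) (use pg in \<open>auto simp: is_packing_def n_def\<close>)
      moreover have "card {i\<in>{..<s'}. g i = b} = j b" for b
        unfolding j_def by (rule arg_cong[where f=card]) auto
      ultimately show ?thesis by simp
    qed
    have se: "(\<Sum>b<n. e b) = l'"
    proof -
      have "(\<Sum>b<n. card {i\<in>{s'..<s'+l'}. g i = b}) = card {s'..<s'+l'}"
        by (rule card_group) (use pg in \<open>auto simp: is_packing_def n_def\<close>)
      moreover have "card {i\<in>{s'..<s'+l'}. g i = b} = e b" for b
        unfolding e_def by (rule arg_cong[where f=card]) auto
      ultimately show ?thesis by simp
    qed
    have w1: "s' * S + l' * (M - S) \<le> (\<Sum>b<n. \<psi> b)"
    proof -
      have "s' * S + l' * (M - S) = (\<Sum>b<n. j b * S + e b * (M - S))"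
        by (simp add: sum.distrib flip: sum_distrib_right sj se)
      also have "\<dots> \<le> (\<Sum>b<n. \<psi> b)" using perbin by (intro sum_mono) auto
      finally show ?thesis .
    qed
    have w2: "l' * M \<le> (\<Sum>b<n. \<psi> b)"
    proof -
      have "l' * M = (\<Sum>b<n. e b * M)"
        by (simp flip: sum_distrib_right se)
      also have "\<dots> \<le> (\<Sum>b<n. \<psi> b)" using perbin by (intro sum_mono) auto
      finally show ?thesis .
    qed
    have spsi: "(\<Sum>b<n. \<psi> b) = c * M + Q"
    proof -
      have "(\<Sum>b<n. \<psi> b) = (\<Sum>b\<in>{..<n} \<inter> {b. used s' l' g b}. (if L \<le> \<sigma> ! b then M else \<sigma> ! b))"
        unfolding \<psi>_def by (subst sum.inter_restrict) auto
      also have "{..<n} \<inter> {b. used s' l' g b} = Ug" by (auto simp: Ug_def)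
      also have "(\<Sum>b\<in>Ug. (if L \<le> \<sigma> ! b then M else \<sigma> ! b))
          = (\<Sum>b\<in>Ug \<inter> {b. L \<le> \<sigma> ! b}. M) + (\<Sum>b\<in>Ug \<inter> - {b. L \<le> \<sigma> ! b}. \<sigma> ! b)"
        by (rule sum.If_cases[OF fin_Ug])
      also have "Ug \<inter> {b. L \<le> \<sigma> ! b} = G" by (auto simp: G_def)
      also have "Ug \<inter> - {b. L \<le> \<sigma> ! b} = Ug - G" by (auto simp: G_def)
      finally show ?thesis by (simp add: c_def Q_def)
    qed
    have i1: "int s' * int S + int l' * int M - int l' * int S \<le> int c * int M + int Q"
      using w1 spsi LM by (simp add: of_nat_diff algebra_simps flip: of_nat_mult of_nat_add)
    have i2: "int l' * int M \<le> int c * int M + int Q"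
      using w2 spsi by (simp flip: of_nat_mult of_nat_add)
    have i3: "int (cost \<sigma> 0 k f) \<le> int P + (int k - int c) * int M"
    proof -
      have "int (cost \<sigma> 0 k f) \<le> int (P + (k - c) * M)" using cf_le by (simp only: of_nat_le_iff)
      also have "int (P + (k - c) * M) = int P + (int k - int c) * int M" using ck by (simp add: of_nat_diff)
      finally show ?thesis .
    qed
    show ?thesis
    proof (cases "l' \<le> s'")
      case True
      then have "min 0 (int l' - int s') = int l' - int s'" by simp
      then show ?thesis using i1 i3 cg unfolding M_def[symmetric] by (simp add: algebra_simps)
    next
      case False
      then have "min 0 (int l' - int s') = 0" by simp
      then show ?thesis using i2 i3 cg unfolding M_def[symmetric] by (simp add: algebra_simps)
    qed
  qed
qed

theorem lemma8:
  fixes S :: nat and \<sigma> :: "nat list" and s' l' k :: nat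
  assumes "S > 1"
    and "bins_ok S \<sigma>"
    and "admissible S \<sigma> k"
    and "admissible S \<sigma> (s' + l')"
    and "2 * k \<ge> s' + 2 * l'"
  shows "R S \<sigma> 0 k \<le> OPT S \<sigma> s' l'
           + ereal (real_of_int (min 0 (int l' - int s') * int S
                                 + (int k - int l') * int (Msz S)))"
proof -
  define c where "c = real_of_int (min 0 (int l' - int s') * int S + (int k - int l') * int (Msz S))"
  show ?thesis
    unfolding c_def[symmetric] R_def
  proof (rule Sup_least)
    fix x assume "x \<in> {ereal (real (cost \<sigma> 0 k f)) | f. reasonable S \<sigma> 0 k f}"
    then obtain f where xf: "x = ereal (real (cost \<sigma> 0 k f))" and rf: "reasonable S \<sigma> 0 k f" by blast
    have "x - ereal c \<le> OPT S \<sigma> s' l'"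
      unfolding OPT_def
    proof (rule Inf_greatest)
      fix y assume "y \<in> {ereal (real (cost \<sigma> s' l' g)) | g. valid S \<sigma> s' l' g}"
      then obtain g where yg: "y = ereal (real (cost \<sigma> s' l' g))" and vg: "valid S \<sigma> s' l' g" by blast
      have "int (cost \<sigma> 0 k f) \<le> int (cost \<sigma> s' l' g)
           + (min 0 (int l' - int s') * int S + (int k - int l') * int (Msz S))"
        by (rule main_ineq[OF assms(1,2,5) rf vg])
      then have "real (cost \<sigma> 0 k f) \<le> real (cost \<sigma> s' l' g) + c"
        unfolding c_def by linarith
      then show "x - ereal c \<le> y" unfolding xf yg by simp
    qed
    then show "x \<le> OPT S \<sigma> s' l' + ereal c" using ereal_minus_le[of "ereal c" x] by simp
  qed
qed

end
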